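(* Let $d\ge 3$. For $1\le i\le d$ let $h_i=a_1a_2\cdots a_{i-1}a_ia_{i-1}\cdots a_3a_2$ (so $h_1=a_1$, $h_2=a_1a_2$, $h_3=a_1a_2a_3a_2$, etc.). Then $h_i$ has infinite order in $G_d$ for every $1\le i\le d$.
   Context: Let $d\ge 3$, $X=\{1,\dots,d\}$, $T$ the $d$-regular rooted tree with vertex set $X^*$. $\mathrm{Aut}(T)$ is the group of root-preserving automorphisms with product left-to-right: $(gh)(u)=h(g(u))$. Sections $g|_u$ are defined by $g(uv)=g(u)\,g|_u(v)$; we write $g=(g|_1,\dots,g|_d)\lambda_g$ with $\lambda_g\in S_d$ the action on the first level; $e$ is the identity; $\overline{j}\in\{1,\dots,d\}$ denotes $j$ mod $d$. $G_d=\langle a_1,\dots,a_d\rangle\le\mathrm{Aut}(T)$ where $a_i$ acts on the first level as $(i\ \overline{i+1})$, with $a_i|_i=a_i$, $a_i|_{\overline{i+1}}=a_{\overline{i+1}}$, and $a_i|_x=e$ otherwise. *)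

theory Defs
  imports Main
begin

text \<open>The alphabet is X = {1..d}; the tree T has vertex set X^*, modelled as
  lists of naturals with entries in {1..d}. Tree automorphisms are modelled by
  their action on words.\<close>

definition nxt :: "nat \<Rightarrow> nat \<Rightarrow> nat" where
  "nxt d i = (i mod d) + 1"

text \<open>The generator a_i: on the first level it swaps i and i+1 (mod d), with
  section a_i at i, section a_{i+1} at i+1, and trivial sections elsewhere.\<close>
fun gen :: "nat \<Rightarrow> nat \<Rightarrow> nat list \<Rightarrow> nat list" where
  "gen d i [] = []"
| "gen d i (x # w) =
     (if x = i then nxt d i # gen d i w
      else if x = nxt d i then i # gen d (nxt d i) w
      else x # w)"

text \<open>Action of the product g_1 g_2 ... g_k of generators a_{g_1}, ..., a_{g_k},
  using the left-to-right convention (gh)(u) = h(g(u)): a_{g_1} is applied first.\<close>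
definition word_act :: "nat \<Rightarrow> nat list \<Rightarrow> nat list \<Rightarrow> nat list" where
  "word_act d js u = fold (gen d) js u"

definition h_word :: "nat \<Rightarrow> nat list" where
  "h_word i = [1..<i] @ [i] @ rev [2..<i]"

definition infinite_order :: "nat \<Rightarrow> (nat list \<Rightarrow> nat list) \<Rightarrow> bool" where
  "infinite_order d g \<longleftrightarrow>
     (\<forall>n::nat. n \<ge> 1 \<longrightarrow> (\<exists>u \<in> lists {1..d}. (g ^^ n) u \<noteq> u))"

end

theory Submission
  imports Defs
begin

definition SS :: "nat \<Rightarrow> (nat list \<Rightarrow> nat list) \<Rightarrow> nat \<Rightarrow> bool" where
  "SS d g L \<longleftrightarrow> (\<forall>n. 1 \<le> n \<longrightarrow> n < L \<longrightarrow> (\<exists>u \<in> lists {1..d}. (g ^^ n) u \<noteq> u))"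

lemma SS_mono: "SS d g L \<Longrightarrow> L' \<le> L \<Longrightarrow> SS d g L'"
  unfolding SS_def by auto

lemma SS_one: "SS d g 1"
  unfolding SS_def by auto

lemma funpow_mult_cons:
  assumes "\<And>w. (g ^^ k) (x # w) = x # f w"
  shows "(g ^^ (k * m)) (x # w) = x # (f ^^ m) w"
proof (induction m arbitrary: w)
  case 0 then show ?case by simp
next
  case (Suc m)
  have "g ^^ (k * Suc m) = (g ^^ k) \<circ> (g ^^ (k * m))"
    by (simp add: funpow_add)
  then show ?case using Suc assms by (simp add: funpow_swap1)
qed

lemma edge:
  assumes x: "x \<in> {1..d}" and k: "k \<ge> 1"
    and pw: "\<And>w. (g ^^ k) (x # w) = x # f w"
    and nr: "\<And>j w w'. 0 < j \<Longrightarrow> j < k \<Longrightarrow> (g ^^ j) (x # w) \<noteq> x # w'"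
    and S: "SS d f L"
  shows "SS d g (k * L)"
  unfolding SS_def
proof (intro allI impI)
  fix n assume n1: "1 \<le> n" and nL: "n < k * L"
  show "\<exists>u\<in>lists {1..d}. (g ^^ n) u \<noteq> u"
  proof (cases "n mod k = 0")
    case True
    then obtain m where nm: "n = k * m" by auto
    with n1 have "1 \<le> m" by (cases m) auto
    moreover from nL nm k have "m < L" by simp
    ultimately obtain w where w: "w \<in> lists {1..d}" "(f ^^ m) w \<noteq> w"
      using S unfolding SS_def by blast
    have "(g ^^ n) (x # w) = x # (f ^^ m) w" using nm funpow_mult_cons[OF pw] by simp
    with w x show ?thesis by (intro bexI[of _ "x # w"]) auto
  next
    case False
    define r where "r = n mod k"
    define q where "q = n div k"
    have nrq: "n = r + k * q" unfolding r_def q_def by simp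
    have "(g ^^ n) [x] = (g ^^ r) ((g ^^ (k * q)) [x])" by (simp add: nrq funpow_add)
    also have "\<dots> = (g ^^ r) (x # (f ^^ q) [])" using funpow_mult_cons[OF pw] by simp
    finally have eq: "(g ^^ n) [x] = (g ^^ r) (x # (f ^^ q) [])" .
    have "0 < r" "r < k" using False k unfolding r_def by auto
    then have "(g ^^ r) (x # (f ^^ q) []) \<noteq> x # []" using nr by blast
    with eq x show ?thesis by (intro bexI[of _ "[x]"]) auto
  qed
qed

lemma wa_Nil[simp]: "word_act d [] u = u" by (simp add: word_act_def)
lemma wa_Cons[simp]: "word_act d (j # js) u = word_act d js (gen d j u)" by (simp add: word_act_def)
lemma wa_append[simp]: "word_act d (a @ b) u = word_act d b (word_act d a u)" by (simp add: word_act_def)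

lemma nxt_lt: "j < d \<Longrightarrow> nxt d j = Suc j" by (simp add: nxt_def)
lemma nxt_d: "d \<ge> 1 \<Longrightarrow> nxt d d = 1" by (simp add: nxt_def)

lemma wa_fix: "(\<forall>j\<in>set js. x \<noteq> j \<and> x \<noteq> nxt d j) \<Longrightarrow> word_act d js (x # w) = x # w"
  by (induction js) auto

lemma wa_up: "a \<le> b \<Longrightarrow> 1 \<le> a \<Longrightarrow> b \<le> d \<Longrightarrow> word_act d [a..<b] (a # w) = b # word_act d [a..<b] w"
proof (induction b arbitrary: w rule: dec_induct)
  case base then show ?case by simp
next
  case (step b)
  then have "nxt d b = Suc b" by (simp add: nxt_lt)
  with step show ?case by simp
qed

lemma wa_down: "a \<le> b \<Longrightarrow> b < d \<Longrightarrow>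
   word_act d (rev [a..<b]) (b # w) = a # word_act d (map Suc (rev [a..<b])) w"
proof (induction b arbitrary: w rule: dec_induct)
  case base then show ?case by simp
next
  case (step b)
  then have "nxt d b = Suc b" by (simp add: nxt_lt)
  with step show ?case by simp
qed

lemma h_at1:
  assumes "2 \<le> i" "i < d"
  shows "word_act d (h_word i) (1 # w) = Suc i # word_act d [1..<Suc i] w"
proof -
  have a: "word_act d [1..<i] (1 # w) = i # word_act d [1..<i] w"
    using assms by (intro wa_up) auto
  have b: "nxt d i = Suc i" using assms by (simp add: nxt_lt)
  have c: "word_act d (rev [2..<i]) (Suc i # v) = Suc i # v" for v
    using assms by (intro wa_fix) (auto simp: nxt_lt)
  show ?thesis unfolding h_word_def using a b c assms by simp
qed

lemma h_atS:
  assumes "2 \<le> i" "i < d"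
  shows "word_act d (h_word i) (Suc i # w) = 2 # word_act d (Suc i # map Suc (rev [2..<i])) w"
proof -
  have a: "word_act d [1..<i] (Suc i # w) = Suc i # w"
    using assms by (intro wa_fix) (auto simp: nxt_lt)
  have b: "nxt d i = Suc i" using assms by (simp add: nxt_lt)
  have c: "word_act d (rev [2..<i]) (i # v) = 2 # word_act d (map Suc (rev [2..<i])) v" for v
    using assms by (intro wa_down) auto
  show ?thesis unfolding h_word_def using a b c by simp
qed

lemma h_at2:
  assumes "2 \<le> i" "i < d"
  shows "word_act d (h_word i) (2 # w) = 1 # word_act d [2] w"
proof -
  have u: "[1..<i] = 1 # [2..<i]" using assms by (simp add: upt_conv_Cons numeral_2_eq_2)
  have n1: "nxt d 1 = 2" using assms by (simp add: nxt_def)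
  have a: "word_act d [2..<i] (1 # v) = 1 # v" for v
    using assms by (intro wa_fix) (auto simp: nxt_lt)
  have b: "nxt d i = Suc i" using assms by (simp add: nxt_lt)
  have c: "word_act d (rev [2..<i]) (1 # v) = 1 # v" for v
    using assms by (intro wa_fix) (auto simp: nxt_lt)
  show ?thesis unfolding h_word_def using u n1 a b c assms by simp
qed

lemma h_next_word:
  assumes "2 \<le> i"
  shows "[1..<Suc i] @ (Suc i # map Suc (rev [2..<i])) @ [2] = h_word (Suc i)"
proof -
  have "map Suc (rev [2..<i]) @ [2] = rev [2..<Suc i]"
    using assms by (simp add: rev_map[symmetric] map_Suc_upt upt_conv_Cons)
  then show ?thesis unfolding h_word_def by simp
qed

lemma edge_h:
  assumes "2 \<le> i" "i < d" "SS d (word_act d (h_word (Suc i))) L"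
  shows "SS d (word_act d (h_word i)) (3 * L)"
proof (rule edge[where x=1 and f="word_act d (h_word (Suc i))"])
  let ?g = "word_act d (h_word i)"
  show "1 \<in> {1..d}" using assms by simp
  show "SS d (word_act d (h_word (Suc i))) L" by fact
  show "(1::nat) \<le> 3" by simp
  fix w
  have "(?g ^^ 3) (1 # w) = ?g (?g (?g (1 # w)))" by (simp add: numeral_eq_Suc)
  also have "\<dots> = 1 # word_act d ([1..<Suc i] @ (Suc i # map Suc (rev [2..<i])) @ [2]) w"
    using assms by (simp only: h_at1 h_atS h_at2 wa_append)
  also have "\<dots> = 1 # word_act d (h_word (Suc i)) w" using h_next_word assms by simp
  finally show "(?g ^^ 3) (1 # w) = 1 # word_act d (h_word (Suc i)) w" .
next
  fix j :: nat and w w' :: "nat list"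
  assume j: "0 < j" "j < 3"
  then have "j = 1 \<or> j = 2" by auto
  then show "(word_act d (h_word i) ^^ j) (1 # w) \<noteq> 1 # w'"
  proof
    assume "j = 1" then show ?thesis using h_at1[OF assms(1,2), of w] assms by simp
  next
    assume j2: "j = 2"
    have "(word_act d (h_word i) ^^ j) (1 # w) = word_act d (h_word i) (word_act d (h_word i) (1 # w))"
      using j2 by (simp add: numeral_eq_Suc)
    also have "\<dots> = 2 # word_act d (Suc i # map Suc (rev [2..<i])) (word_act d [1..<Suc i] w)"
      by (simp only: h_at1[OF assms(1,2)] h_atS[OF assms(1,2)])
    finally show ?thesis by simp
  qed
qed

lemma h1_word: "h_word 1 = [1]" by (simp add: h_word_def)
lemma h2_word: "h_word 2 = [1,2]" by (simp add: h_word_def numeral_2_eq_2)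
lemma h3_word: "h_word 3 = [1,2,3,2]" by (simp add: h_word_def numeral_3_eq_3 numeral_2_eq_2)

lemma edge_h1:
  assumes "3 \<le> d" "SS d (word_act d (h_word 2)) L"
  shows "SS d (word_act d (h_word 1)) (2 * L)"
proof (rule edge[where x=1 and f="word_act d (h_word 2)"])
  have n1: "nxt d 1 = 2" using assms by (simp add: nxt_def)
  show "1 \<in> {1..d}" using assms by simp
  show "SS d (word_act d (h_word 2)) L" by fact
  show "(1::nat) \<le> 2" by simp
  fix w
  show "(word_act d (h_word 1) ^^ 2) (1 # w) = 1 # word_act d (h_word 2) w"
  proof -
    have "(word_act d (h_word 1) ^^ 2) (1 # w) = word_act d [1] (word_act d [1] (1 # w))"
      by (simp only: h1_word numeral_2_eq_2 funpow.simps comp_apply id_apply)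
    also have "\<dots> = 1 # word_act d [1,2] w" using n1 by simp
    finally show ?thesis by (simp only: h2_word)
  qed
next
  have n1: "nxt d 1 = 2" using assms by (simp add: nxt_def)
  fix j :: nat and w w' :: "nat list"
  assume j: "0 < j" "j < 2"
  then have "j = 1" by auto
  then have "word_act d (h_word 1) ^^ j = word_act d [1]" by (simp add: h_word_def)
  then have "(word_act d (h_word 1) ^^ j) (1 # w) = word_act d [1] (1 # w)"
    by simp
  then show "(word_act d (h_word 1) ^^ j) (1 # w) \<noteq> 1 # w'" using n1 by simp
qed

lemma hd_at3:
  assumes "3 \<le> d"
  shows "word_act d (h_word d) (3 # w) = 3 # word_act d [3,2] w"
proof -
  have u: "[1..<d] = 1 # 2 # [3..<d]" using assms by (simp add: upt_conv_Cons numeral_2_eq_2 numeral_3_eq_3)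
  have r: "rev [2..<d] = rev [3..<d] @ [2]" using assms by (simp add: upt_conv_Cons numeral_2_eq_2 numeral_3_eq_3)
  have n1: "nxt d 1 = 2" "nxt d 2 = 3" using assms by (simp_all add: nxt_def)
  have nd: "nxt d d = 1" using assms by (simp add: nxt_def)
  have a: "word_act d [3..<d] (2 # v) = 2 # v" for v
    using assms by (intro wa_fix) (auto simp: nxt_lt)
  have c: "word_act d (rev [3..<d]) (2 # v) = 2 # v" for v
    using assms by (intro wa_fix) (auto simp: nxt_lt)
  show ?thesis unfolding h_word_def using u r n1 nd a c assms by simp
qed

lemma edge_hd:
  assumes "3 \<le> d" "SS d (word_act d [3,2]) L"
  shows "SS d (word_act d (h_word d)) L"
proof -
  have "SS d (word_act d (h_word d)) (1 * L)"
  proof (rule edge[where x=3 and f="word_act d [3,2]"])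
    show "3 \<in> {1..d}" using assms by simp
    show "SS d (word_act d [3,2]) L" by fact
  qed (use hd_at3[OF assms(1)] in auto)
  then show ?thesis by simp
qed

lemma edge_32:
  assumes "3 \<le> d" "SS d (word_act d (map (nxt d) (h_word 3))) L"
  shows "SS d (word_act d [3,2]) (3 * L)"
proof -
  define m where "m = nxt d 3"
  have n1: "nxt d 1 = 2" "nxt d 2 = 3" using assms by (simp_all add: nxt_def)
  have m: "m \<noteq> 2" "m \<noteq> 3" unfolding m_def nxt_def using assms
    by (auto simp: mod_if split: if_splits)
  have hm: "map (nxt d) (h_word 3) = [2,3,m,3]" using n1 by (simp add: h3_word m_def)
  let ?g = "word_act d [3,2]"
  have g2: "?g (2 # w) = 3 # word_act d [2] w" for w using n1 m by (simp add: m_def[symmetric])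
  have g3: "?g (3 # w) = m # word_act d [3] w" for w using n1 m by (simp add: m_def[symmetric])
  have gm: "?g (m # w) = 2 # word_act d [m,3] w" for w using n1 m by (simp add: m_def[symmetric])
  show ?thesis
  proof (rule edge[where x=2 and f="word_act d (map (nxt d) (h_word 3))"])
    show "2 \<in> {1..d}" using assms by simp
    show "SS d (word_act d (map (nxt d) (h_word 3))) L" by fact
    show "(1::nat) \<le> 3" by simp
    fix w
    show "(?g ^^ 3) (2 # w) = 2 # word_act d (map (nxt d) (h_word 3)) w"
    proof -
      have "(?g ^^ 3) (2 # w) = ?g (?g (?g (2 # w)))"
        by (simp only: numeral_3_eq_3 funpow.simps comp_apply id_apply)
      also have "\<dots> = 2 # word_act d [2,3,m,3] w"
        by (simp only: g2 g3 gm) simp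
      finally show ?thesis unfolding hm .
    qed
  next
    fix j :: nat and w w' :: "nat list"
    assume j: "0 < j" "j < 3"
    then have "j = 1 \<or> j = 2" by auto
    then show "(?g ^^ j) (2 # w) \<noteq> 2 # w'"
    proof
      assume "j = 1"
      then have "?g ^^ j = ?g" by simp
      then have "(?g ^^ j) (2 # w) = 3 # word_act d [2] w"
        by (simp only: g2)
      then show ?thesis by simp
    next
      assume "j = 2"
      then have "?g ^^ j = ?g \<circ> ?g" by (simp add: numeral_2_eq_2)
      then have "(?g ^^ j) (2 # w) = m # word_act d [3] (word_act d [2] w)"
        by (simp only: g2 g3 comp_apply)
      then show ?thesis using m by simp
    qed
  qed
qed

lemma nxt_range: "1 \<le> d \<Longrightarrow> nxt d i \<in> {1..d}"
  by (simp add: nxt_def Suc_leI)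

lemma nxt_eq: "x \<in> {1..d} \<Longrightarrow> nxt d x = (if x = d then 1 else Suc x)"
  by (auto simp: nxt_def)

lemma nxt_inj:
  assumes x: "x \<in> {1..d}" and y: "y \<in> {1..d}" and e: "nxt d x = nxt d y"
  shows "x = y"
proof -
  have ex: "nxt d x = (if x = d then 1 else Suc x)" by (rule nxt_eq[OF x])
  have ey: "nxt d y = (if y = d then 1 else Suc y)" by (rule nxt_eq[OF y])
  show ?thesis using x y e unfolding ex ey by (cases "x = d"; cases "y = d") auto
qed

lemma gen_range: "1 \<le> d \<Longrightarrow> i \<in> {1..d} \<Longrightarrow> set w \<subseteq> {1..d} \<Longrightarrow> set (gen d i w) \<subseteq> {1..d}"
proof (induction w arbitrary: i)
  case Nil then show ?case by simp
next
  case (Cons x w)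
  have "nxt d i \<in> {1..d}" using Cons.prems by (intro nxt_range) auto
  with Cons show ?case by auto
qed

lemma gen_rot: "1 \<le> d \<Longrightarrow> i \<in> {1..d} \<Longrightarrow> set w \<subseteq> {1..d} \<Longrightarrow>
   gen d (nxt d i) (map (nxt d) w) = map (nxt d) (gen d i w)"
proof (induction w arbitrary: i)
  case Nil then show ?case by simp
next
  case (Cons x w)
  have ni: "nxt d i \<in> {1..d}" using Cons.prems by (intro nxt_range) auto
  have x: "x \<in> {1..d}" using Cons.prems by auto
  have e1: "nxt d x = nxt d i \<longleftrightarrow> x = i" using nxt_inj[OF x Cons.prems(2)] by auto
  have e2: "nxt d x = nxt d (nxt d i) \<longleftrightarrow> x = nxt d i" using nxt_inj[OF x ni] by auto
  have w: "set w \<subseteq> {1..d}" using Cons.prems by auto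
  show ?case
  proof (cases "x = i")
    case True
    then show ?thesis using Cons.IH[OF Cons.prems(1,2) w] by simp
  next
    case False
    then have ne: "nxt d x \<noteq> nxt d i" using e1 by simp
    show ?thesis
    proof (cases "x = nxt d i")
      case True
      then show ?thesis using Cons.IH[OF Cons.prems(1) ni w] False ne by simp
    next
      case False2: False
      then have "nxt d x \<noteq> nxt d (nxt d i)" using e2 by simp
      then show ?thesis using False False2 ne by simp
    qed
  qed
qed

lemma wa_range: "1 \<le> d \<Longrightarrow> set js \<subseteq> {1..d} \<Longrightarrow> set u \<subseteq> {1..d} \<Longrightarrow> set (word_act d js u) \<subseteq> {1..d}"
proof (induction js arbitrary: u)
  case Nil then show ?case by simp
next
  case (Cons j js)
  have "set (gen d j u) \<subseteq> {1..d}" using Cons.prems by (intro gen_range) auto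
  then show ?case using Cons by simp
qed

lemma wa_rot: "1 \<le> d \<Longrightarrow> set js \<subseteq> {1..d} \<Longrightarrow> set u \<subseteq> {1..d} \<Longrightarrow>
   word_act d (map (nxt d) js) (map (nxt d) u) = map (nxt d) (word_act d js u)"
proof (induction js arbitrary: u)
  case Nil then show ?case by simp
next
  case (Cons j js)
  have "set (gen d j u) \<subseteq> {1..d}" using Cons by (intro gen_range) auto
  then show ?case using Cons by (simp add: gen_rot)
qed

lemma wa_rot_pow:
  assumes "1 \<le> d" "set js \<subseteq> {1..d}" "set u \<subseteq> {1..d}"
  shows " (word_act d (map (nxt d) js) ^^ n) (map (nxt d) u) = map (nxt d) ((word_act d js ^^ n) u)
   \<and> set ((word_act d js ^^ n) u) \<subseteq> {1..d}"
proof (induction n)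
  case 0 then show ?case using assms by simp
next
  case (Suc n)
  then show ?case using wa_rot[OF assms(1,2)] wa_range[OF assms(1,2)] by simp
qed

lemma SS_rot:
  assumes "1 \<le> d" "set js \<subseteq> {1..d}" "SS d (word_act d js) L"
  shows "SS d (word_act d (map (nxt d) js)) L"
  unfolding SS_def
proof (intro allI impI)
  fix n assume "1 \<le> n" "n < L"
  then obtain u where u: "u \<in> lists {1..d}" "(word_act d js ^^ n) u \<noteq> u"
    using assms(3) unfolding SS_def by blast
  have su: "set u \<subseteq> {1..d}" using u by auto
  have p: "(word_act d (map (nxt d) js) ^^ n) (map (nxt d) u) = map (nxt d) ((word_act d js ^^ n) u)"
      and r: "set ((word_act d js ^^ n) u) \<subseteq> {1..d}"
    using wa_rot_pow[OF assms(1,2) su] by auto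
  have "map (nxt d) ((word_act d js ^^ n) u) \<noteq> map (nxt d) u"
  proof
    assume "map (nxt d) ((word_act d js ^^ n) u) = map (nxt d) u"
    moreover have "inj_on (nxt d) {1..d}"
      unfolding inj_on_def using nxt_inj by blast
    then have "inj_on (nxt d) (set ((word_act d js ^^ n) u) \<union> set u)"
      by (rule inj_on_subset) (use r su in blast)
    ultimately have "(word_act d js ^^ n) u = u" by (rule map_inj_on)
    with u show False by simp
  qed
  moreover have "set (map (nxt d) u) \<subseteq> {1..d}" using nxt_range[OF assms(1)] by auto
  ultimately show "\<exists>u\<in>lists {1..d}. (word_act d (map (nxt d) js) ^^ n) u \<noteq> u"
    using p by (intro bexI[of _ "map (nxt d) u"]) auto
qed

lemma chain:
  assumes "3 \<le> d"
  shows "2 \<le> i \<Longrightarrow> i + k \<le> d \<Longrightarrow> SS d (word_act d (h_word (i + k))) L \<Longrightarrow> SS d (word_act d (h_word i)) L"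
proof (induction k arbitrary: i)
  case 0 then show ?case by simp
next
  case (Suc k)
  have "SS d (word_act d (h_word (Suc i + k))) L" using Suc.prems by simp
  then have "SS d (word_act d (h_word (Suc i))) L" using Suc.IH[of "Suc i"] Suc.prems by simp
  then have "SS d (word_act d (h_word i)) (3 * L)" using Suc.prems by (intro edge_h) auto
  then show ?case by (rule SS_mono) simp
qed

lemma cycle:
  assumes "3 \<le> d" "SS d (word_act d (h_word 3)) L"
  shows "SS d (word_act d (h_word d)) (3 * L)"
proof -
  have "set (h_word 3) \<subseteq> {1..d}" using assms by (simp add: h3_word)
  then have "SS d (word_act d (map (nxt d) (h_word 3))) L" using assms by (intro SS_rot) auto
  then have "SS d (word_act d [3,2]) (3 * L)" using assms by (intro edge_32) auto
  then show ?thesis using assms by (intro edge_hd) auto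
qed

lemma h3_all:
  assumes "3 \<le> d"
  shows "SS d (word_act d (h_word 3)) (3 ^ k)"
proof (induction k)
  case 0 then show ?case using SS_one by simp
next
  case (Suc k)
  have "SS d (word_act d (h_word d)) (3 * 3 ^ k)" using cycle[OF assms Suc.IH] .
  then show ?case using chain[OF assms, of 3 "d - 3"] assms by simp
qed

lemma hd_all:
  assumes "3 \<le> d"
  shows "SS d (word_act d (h_word d)) L"
proof -
  have "L < 2 ^ L" by (rule less_exp)
  moreover have "(2::nat) ^ L \<le> 3 ^ L" by (rule power_mono) auto
  ultimately have "L \<le> 3 ^ L" by simp
  then have "SS d (word_act d (h_word 3)) L" using h3_all[OF assms, of L] SS_mono by blast
  then have "SS d (word_act d (h_word d)) (3 * L)" using cycle[OF assms] by blast
  then show ?thesis by (rule SS_mono) simp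
qed

theorem lemma3p5:
  fixes d i :: nat
  assumes "d \<ge> 3" and "1 \<le> i" and "i \<le> d"
  shows "infinite_order d (word_act d (h_word i))"
proof -
  have all: "SS d (word_act d (h_word i)) L" for L
  proof (cases "i = 1")
    case True
    have "SS d (word_act d (h_word 2)) L"
    proof -
      have e: "2 + (d - 2) = d" using assms by simp
      show ?thesis using chain[OF assms(1), of 2 "d - 2", unfolded e] hd_all[OF assms(1)] assms by simp
    qed
    then have "SS d (word_act d (h_word 1)) (2 * L)" using assms by (intro edge_h1) auto
    then show ?thesis using True by (rule_tac SS_mono) auto
  next
    case False
    then show ?thesis using chain[OF assms(1), of i "d - i"] hd_all[OF assms(1)] assms by simp
  qed
  show ?thesis unfolding infinite_order_def
  proof (intro allI impI)
    fix n :: nat assume "1 \<le> n"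
    then show "\<exists>u\<in>lists {1..d}. (word_act d (h_word i) ^^ n) u \<noteq> u"
      using all[of "Suc n"] unfolding SS_def by blast
  qed
qed

end
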